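(* Let $\mathbf{T}$ and $\mathbf{T}'$ be distributive lattices and let $f:\mathbf{T}\to\mathbf{T}'$ be a morphism of distributive lattices. Let $\operatorname{Spec}(f):\operatorname{Spec}\mathbf{T}'\to\operatorname{Spec}\mathbf{T}$ be the dual map, $\mathfrak{q}\mapsto f^{-1}(\mathfrak{q})$. In classical mathematics, the following are equivalent. 1. $\operatorname{Spec}(f)$ is an open map. 2. There exists a map $\tilde f:\mathbf{T}'\to\mathbf{T}$ with the following properties: (a) for all $c\in\mathbf{T}$ and $b\in\mathbf{T}'$, $b\le f(c)\iff \tilde f(b)\le c$ (in particular $b\le f(\tilde f(b))$ and $\tilde f(b_1\vee b_2)=\tilde f(b_1)\vee\tilde f(b_2)$); (b) for all $a,c\in\mathbf{T}$ and $b\in\mathbf{T}'$, $f(a)\wedge b\le f(c)\iff a\wedge\tilde f(b)\le c$; (c) for all $a\in\mathbf{T}$ and $b\in\mathbf{T}'$, $\tilde f(f(a)\wedge b)=a\wedge\tilde f(b)$; (d) for all $a\in\mathbf{T}$, $\tilde f(f(a))=\tilde f(1)\wedge a$. 3. There exists a map $\tilde f:\mathbf{T}'\to\mathbf{T}$ satisfying property (b) above. 4. For every $b\in\mathbf{T}'$ the greatest lower bound $\bigwedge_{c\in\mathbf{T},\ b\le f(c)} c$ exists in $\mathbf{T}$, and, writing $\tilde f(b)$ for it, property (b) above holds.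
   Context: A prime ideal of a distributive lattice $\mathbf{T}\neq\mathbf{1}$ is an ideal whose complement is a filter; equivalently it corresponds to a lattice morphism $\mathbf{T}\to\mathbf{2}$. The spectrum $\operatorname{Spec}\mathbf{T}$ is the set of prime ideals of $\mathbf{T}$ with the topology having as basis of open sets the sets $\mathfrak{D}_{\mathbf{T}}(a)=\{\mathfrak{p}\in\operatorname{Spec}\mathbf{T}\mid a\notin\mathfrak{p}\}$ for $a\in\mathbf{T}$. A map is open if it sends open sets to open sets. *)

theory Defs
  imports "HOL-Analysis.Analysis"
begin

definition dlat_hom :: "('a::{distrib_lattice,bounded_lattice} \<Rightarrow> 'b::{distrib_lattice,bounded_lattice}) \<Rightarrow> bool" where
  "dlat_hom f \<longleftrightarrow> f bot = bot \<and> f top = top \<and>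
     (\<forall>x y. f (sup x y) = sup (f x) (f y)) \<and> (\<forall>x y. f (inf x y) = inf (f x) (f y))"

definition prime_ideal :: "'a::{distrib_lattice,bounded_lattice} set \<Rightarrow> bool" where
  "prime_ideal p \<longleftrightarrow> bot \<in> p \<and> (\<forall>x y. x \<in> p \<longrightarrow> y \<in> p \<longrightarrow> sup x y \<in> p)
     \<and> (\<forall>x y. x \<in> p \<longrightarrow> y \<le> x \<longrightarrow> y \<in> p)
     \<and> top \<notin> p \<and> (\<forall>x y. x \<notin> p \<longrightarrow> y \<notin> p \<longrightarrow> inf x y \<notin> p)"

definition Spec :: "'a::{distrib_lattice,bounded_lattice} set set" where
  "Spec = {p. prime_ideal p}"

definition DD :: "'a::{distrib_lattice,bounded_lattice} \<Rightarrow> 'a set set" where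
  "DD a = {p \<in> Spec. a \<notin> p}"

definition Spec_top :: "'a::{distrib_lattice,bounded_lattice} set topology" where
  "Spec_top = subtopology (topology_generated_by (range DD)) Spec"

definition Spec_map :: "('a \<Rightarrow> 'b) \<Rightarrow> 'b set \<Rightarrow> 'a set" where
  "Spec_map f q = f -` q"

end

theory Submission imports Defs begin

definition is_ideal :: "'a::{distrib_lattice,bounded_lattice} set \<Rightarrow> bool" where
  "is_ideal J \<longleftrightarrow> bot \<in> J \<and> (\<forall>x y. x \<in> J \<longrightarrow> y \<in> J \<longrightarrow> sup x y \<in> J) \<and> (\<forall>x y. x \<in> J \<longrightarrow> y \<le> x \<longrightarrow> y \<in> J)"

lemma prime_ideal_thm:
  fixes I F :: "'a::{distrib_lattice,bounded_lattice} set"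
  assumes I: "is_ideal I" and Ft: "top \<in> F" and Fm: "\<And>x y. x \<in> F \<Longrightarrow> y \<in> F \<Longrightarrow> inf x y \<in> F"
    and dis: "I \<inter> F = {}"
  shows "\<exists>p. prime_ideal p \<and> I \<subseteq> p \<and> p \<inter> F = {}"
proof -
  define A where "A = {J. is_ideal J \<and> I \<subseteq> J \<and> J \<inter> F = {}}"
  have "\<exists>M\<in>A. \<forall>X\<in>A. M \<subseteq> X \<longrightarrow> X = M"
  proof (rule subset_Zorn_nonempty)
    show "A \<noteq> {}" using I dis by (auto simp: A_def)
  next
    fix C assume C: "C \<noteq> {}" "subset.chain A C"
    then have CA: "C \<subseteq> A" and ch: "\<And>X Y. X \<in> C \<Longrightarrow> Y \<in> C \<Longrightarrow> X \<subseteq> Y \<or> Y \<subseteq> X"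
      by (auto simp: subset.chain_def)
    have "is_ideal (\<Union>C)"
      unfolding is_ideal_def
    proof (intro conjI allI impI)
      show "bot \<in> \<Union>C" using C CA by (auto simp: A_def is_ideal_def)
    next
      fix x y assume "x \<in> \<Union>C" "y \<in> \<Union>C"
      then obtain X Y where XY: "X \<in> C" "Y \<in> C" "x \<in> X" "y \<in> Y" by auto
      have iX: "is_ideal X" and iY: "is_ideal Y" using XY CA by (auto simp: A_def)
      show "sup x y \<in> \<Union>C"
      proof (cases "X \<subseteq> Y")
        case True
        then have "sup x y \<in> Y" using iY XY by (auto simp: is_ideal_def)
        then show ?thesis using XY by blast
      next
        case False
        then have "Y \<subseteq> X" using ch XY by blast
        then have "sup x y \<in> X" using iX XY by (auto simp: is_ideal_def)
        then show ?thesis using XY by blast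
      qed
    next
      fix x y assume "x \<in> \<Union>C" "y \<le> x"
      then obtain X where X: "X \<in> C" "x \<in> X" by auto
      have "is_ideal X" using X CA by (auto simp: A_def)
      then have "y \<in> X" using X \<open>y \<le> x\<close> by (auto simp: is_ideal_def)
      then show "y \<in> \<Union>C" using X by blast
    qed
    then show "\<Union>C \<in> A" using C CA by (auto simp: A_def)
  qed
  then obtain M where MA: "M \<in> A" and max: "\<And>X. X \<in> A \<Longrightarrow> M \<subseteq> X \<Longrightarrow> X = M" by blast
  have Mi: "is_ideal M" and IM: "I \<subseteq> M" and MF: "M \<inter> F = {}" using MA by (auto simp: A_def)
  have ext: "\<exists>m\<in>M. \<exists>g\<in>F. g \<le> sup m x" if "x \<notin> M" for x
  proof (rule ccontr)
    assume nx: "\<not> ?thesis"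
    define J where "J = {z. \<exists>m\<in>M. z \<le> sup m x}"
    have "is_ideal J" unfolding is_ideal_def J_def
    proof (intro conjI allI impI)
      show "bot \<in> {z. \<exists>m\<in>M. z \<le> sup m x}" using Mi by (auto simp: is_ideal_def)
    next
      fix u v assume "u \<in> {z. \<exists>m\<in>M. z \<le> sup m x}" "v \<in> {z. \<exists>m\<in>M. z \<le> sup m x}"
      then obtain m1 m2 where "m1 \<in> M" "m2 \<in> M" "u \<le> sup m1 x" "v \<le> sup m2 x" by auto
      moreover have "sup m1 m2 \<in> M" using Mi \<open>m1 \<in> M\<close> \<open>m2 \<in> M\<close> by (auto simp: is_ideal_def)
      moreover have "sup u v \<le> sup (sup m1 m2) x" using calculation
        by (meson le_sup_iff order_trans sup_ge1 sup_ge2 sup_mono)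
      ultimately show "sup u v \<in> {z. \<exists>m\<in>M. z \<le> sup m x}" by blast
    next
      fix u v assume "u \<in> {z. \<exists>m\<in>M. z \<le> sup m x}" "v \<le> u"
      then show "v \<in> {z. \<exists>m\<in>M. z \<le> sup m x}" using order_trans by blast
    qed
    moreover have MJ: "M \<subseteq> J" unfolding J_def using sup_ge1 by blast
    moreover have "J \<inter> F = {}" using nx unfolding J_def by auto
    ultimately have "J \<in> A" using IM unfolding A_def by blast
    then have "J = M" using max MJ by blast
    moreover have "x \<in> J" using Mi unfolding J_def is_ideal_def by (metis mem_Collect_eq sup_ge2)
    ultimately show False using that by simp
  qed
  have "prime_ideal M"
    unfolding prime_ideal_def
  proof (intro conjI allI impI)
    show "bot \<in> M" using Mi by (simp add: is_ideal_def)
    show "\<And>x y. x \<in> M \<Longrightarrow> y \<in> M \<Longrightarrow> sup x y \<in> M" using Mi by (simp add: is_ideal_def)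
    show "\<And>x y. x \<in> M \<Longrightarrow> y \<le> x \<Longrightarrow> y \<in> M" using Mi by (simp add: is_ideal_def)
    show "top \<notin> M" using MF Ft by auto
  next
    fix x y assume "x \<notin> M" "y \<notin> M"
    then obtain m1 g1 m2 g2 where m: "m1 \<in> M" "g1 \<in> F" "g1 \<le> sup m1 x" "m2 \<in> M" "g2 \<in> F" "g2 \<le> sup m2 y"
      using ext by meson
    define m where "m = sup m1 m2"
    have mM: "m \<in> M" using Mi m by (auto simp: is_ideal_def m_def)
    have "inf g1 g2 \<le> inf (sup m x) (sup m y)" using m unfolding m_def
      by (meson inf_mono le_sup_iff order_trans sup_ge1 sup_ge2 sup_mono)
    also have "\<dots> = sup m (inf x y)" by (simp add: sup_inf_distrib1)
    finally have le: "inf g1 g2 \<le> sup m (inf x y)" .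
    show "inf x y \<notin> M"
    proof
      assume "inf x y \<in> M"
      then have "sup m (inf x y) \<in> M" using Mi mM by (auto simp: is_ideal_def)
      then have "inf g1 g2 \<in> M" using Mi le by (auto simp: is_ideal_def)
      then show False using MF Fm m by auto
    qed
  qed
  then show ?thesis using IM MF by blast
qed

lemma sep:
  fixes x y :: "'a::{distrib_lattice,bounded_lattice}"
  assumes "\<not> x \<le> y"
  shows "\<exists>p. prime_ideal p \<and> y \<in> p \<and> x \<notin> p"
proof -
  have "is_ideal {z. z \<le> y}" by (auto simp: is_ideal_def)
  from prime_ideal_thm[OF this, of "{z. x \<le> z}"] assms
  show ?thesis by (auto dest: order_trans)
qed


lemma hom_mono: "dlat_hom f \<Longrightarrow> x \<le> y \<Longrightarrow> f x \<le> f y"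
  unfolding dlat_hom_def by (metis le_iff_sup)

lemma prime_preimage:
  assumes h: "dlat_hom f" and q: "prime_ideal q"
  shows "prime_ideal (f -` q)"
  using q h hom_mono[OF h] unfolding prime_ideal_def dlat_hom_def by auto

lemma prime_down: "prime_ideal p \<Longrightarrow> x \<in> p \<Longrightarrow> y \<le> x \<Longrightarrow> y \<in> p"
  unfolding prime_ideal_def by blast

lemma prime_inf: "prime_ideal p \<Longrightarrow> inf x y \<in> p \<longleftrightarrow> x \<in> p \<or> y \<in> p"
  unfolding prime_ideal_def by (meson inf_le1 inf_le2)

lemma prime_sup: "prime_ideal p \<Longrightarrow> sup x y \<in> p \<longleftrightarrow> x \<in> p \<and> y \<in> p"
  unfolding prime_ideal_def by (meson sup_ge1 sup_ge2)

lemma DD_sub: "DD a \<subseteq> Spec" by (auto simp: DD_def)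

lemma DD_sup: "DD (sup a b) = DD a \<union> DD b"
  by (auto simp: DD_def Spec_def prime_sup)

lemma DD_inf: "DD (inf a b) = DD a \<inter> DD b"
  by (auto simp: DD_def Spec_def prime_inf)

lemma DD_bot: "DD bot = {}"
  by (auto simp: DD_def Spec_def prime_ideal_def)

lemma gen_basis:
  "generate_topology_on (range DD) V \<Longrightarrow> p \<in> V \<Longrightarrow> \<exists>c. p \<in> DD c \<and> DD c \<subseteq> V"
proof (induction V arbitrary: p rule: generate_topology_on.induct)
  case (Int a b)
  then obtain c1 c2 where "p \<in> DD c1" "DD c1 \<subseteq> a" "p \<in> DD c2" "DD c2 \<subseteq> b" by blast
  then show ?case by (intro exI[of _ "inf c1 c2"]) (auto simp: DD_inf)
next
  case (UN K)
  then show ?case by blast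
qed auto

lemma open_basis:
  "openin Spec_top U \<Longrightarrow> p \<in> U \<Longrightarrow> \<exists>c. p \<in> DD c \<and> DD c \<subseteq> U"
proof -
  assume "openin Spec_top U" "p \<in> U"
  then obtain V where V: "generate_topology_on (range DD) V" "U = V \<inter> Spec"
    unfolding Spec_top_def openin_subtopology openin_topology_generated_by_iff by blast
  then obtain c where "p \<in> DD c" "DD c \<subseteq> V" using gen_basis \<open>p \<in> U\<close> by blast
  then show ?thesis using V DD_sub by blast
qed

lemma open_DD: "openin Spec_top (DD b)"
  unfolding Spec_top_def openin_subtopology openin_topology_generated_by_iff
  using DD_sub by (intro exI[of _ "DD b"]) (auto intro: generate_topology_on.Basis)

lemma open_from_basis:
  assumes "\<And>p. p \<in> U \<Longrightarrow> \<exists>c. p \<in> DD c \<and> DD c \<subseteq> U"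
  shows "openin Spec_top U"
proof -
  have eq: "U = \<Union>{DD c | c. DD c \<subseteq> U}" using assms by blast
  have "generate_topology_on (range DD) (\<Union>{DD c | c. DD c \<subseteq> U})"
    by (rule generate_topology_on.UN) (auto intro: generate_topology_on.Basis)
  moreover have "U \<subseteq> Spec" using eq DD_sub by blast
  ultimately show ?thesis
    unfolding Spec_top_def openin_subtopology openin_topology_generated_by_iff
    using eq by blast
qed

lemma P3_from_image:
  fixes f :: "'a::{distrib_lattice,bounded_lattice} \<Rightarrow> 'b::{distrib_lattice,bounded_lattice}"
  assumes h: "dlat_hom f" and img: "\<And>b. Spec_map f ` DD b = DD (ft b)"
  shows "inf (f a) b \<le> f c \<longleftrightarrow> inf a (ft b) \<le> c"
proof
  assume le: "inf (f a) b \<le> f c"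
  show "inf a (ft b) \<le> c"
  proof (rule ccontr)
    assume "\<not> ?thesis"
    then obtain p where p: "prime_ideal p" "c \<in> p" "inf a (ft b) \<notin> p" using sep by blast
    then have "a \<notin> p" "ft b \<notin> p" using prime_inf by blast+
    then have "p \<in> DD (ft b)" using p by (auto simp: DD_def Spec_def)
    then have "p \<in> Spec_map f ` DD b" using img[of b] by simp
    then obtain q where q: "q \<in> DD b" "p = f -` q" by (auto simp: Spec_map_def)
    then have qp: "prime_ideal q" "b \<notin> q" by (auto simp: DD_def Spec_def)
    have "f a \<notin> q" using q \<open>a \<notin> p\<close> by auto
    then have "inf (f a) b \<notin> q" using qp prime_inf by blast
    moreover have "f c \<in> q" using q p by auto
    ultimately show False using le prime_down[OF qp(1)] by blast
  qed
next
  assume le: "inf a (ft b) \<le> c"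
  show "inf (f a) b \<le> f c"
  proof (rule ccontr)
    assume "\<not> ?thesis"
    then obtain q where q: "prime_ideal q" "f c \<in> q" "inf (f a) b \<notin> q" using sep by blast
    then have "f a \<notin> q" "b \<notin> q" using prime_inf by blast+
    then have "q \<in> DD b" using q by (auto simp: DD_def Spec_def)
    then have "f -` q \<in> DD (ft b)" using img[of b] by (auto simp: Spec_map_def)
    then have "ft b \<notin> f -` q" by (auto simp: DD_def)
    moreover have pp: "prime_ideal (f -` q)" using prime_preimage[OF h q(1)] .
    ultimately have "inf a (ft b) \<notin> f -` q" using \<open>f a \<notin> q\<close> prime_inf by blast
    then show False using le q(2) prime_down[OF pp] by auto
  qed
qed

lemma image_from_P3:
  fixes f :: "'a::{distrib_lattice,bounded_lattice} \<Rightarrow> 'b::{distrib_lattice,bounded_lattice}"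
  assumes h: "dlat_hom f" and P3: "\<And>a c b. inf (f a) b \<le> f c \<longleftrightarrow> inf a (ft b) \<le> c"
  shows "Spec_map f ` DD b = DD (ft b)"
proof
  have ftop: "f top = top" and fbot: "f bot = bot" and fsup: "\<And>x y. f (sup x y) = sup (f x) (f y)"
    and finf: "\<And>x y. f (inf x y) = inf (f x) (f y)" using h by (auto simp: dlat_hom_def)
  have bft: "b \<le> f (ft b)" using P3[of top b "ft b"] ftop by simp
  show "Spec_map f ` DD b \<subseteq> DD (ft b)"
  proof
    fix p assume "p \<in> Spec_map f ` DD b"
    then obtain q where q: "prime_ideal q" "b \<notin> q" "p = f -` q" by (auto simp: Spec_map_def DD_def Spec_def)
    then have "f (ft b) \<notin> q" using bft prime_down by blast
    then show "p \<in> DD (ft b)" using q prime_preimage[OF h q(1)] by (auto simp: DD_def Spec_def)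
  qed
  show "DD (ft b) \<subseteq> Spec_map f ` DD b"
  proof
    fix p assume "p \<in> DD (ft b)"
    then have p: "prime_ideal p" "ft b \<notin> p" by (auto simp: DD_def Spec_def)
    define I where "I = {z. \<exists>c\<in>p. z \<le> f c}"
    define F where "F = {z. \<exists>a. a \<notin> p \<and> inf (f a) b \<le> z}"
    have I: "is_ideal I" unfolding is_ideal_def I_def
    proof (intro conjI allI impI)
      show "bot \<in> {z. \<exists>c\<in>p. z \<le> f c}" using p by (auto simp: prime_ideal_def)
    next
      fix x y assume "x \<in> {z. \<exists>c\<in>p. z \<le> f c}" "y \<in> {z. \<exists>c\<in>p. z \<le> f c}"
      then obtain c1 c2 where "c1 \<in> p" "c2 \<in> p" "x \<le> f c1" "y \<le> f c2" by auto
      moreover have "sup c1 c2 \<in> p" using p(1) prime_sup calculation by blast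
      moreover have "sup x y \<le> f (sup c1 c2)" using calculation by (simp add: fsup le_supI1 le_supI2)
      ultimately show "sup x y \<in> {z. \<exists>c\<in>p. z \<le> f c}" by blast
    next
      fix x y assume "x \<in> {z. \<exists>c\<in>p. z \<le> f c}" "y \<le> x"
      then show "y \<in> {z. \<exists>c\<in>p. z \<le> f c}" using order_trans by blast
    qed
    have Ft: "top \<in> F" using p ftop by (auto simp: F_def prime_ideal_def)
    have Fm: "inf x y \<in> F" if xF: "x \<in> F" and yF: "y \<in> F" for x y
    proof -
      obtain a1 where a1: "a1 \<notin> p" "inf (f a1) b \<le> x" using xF unfolding F_def by blast
      obtain a2 where a2: "a2 \<notin> p" "inf (f a2) b \<le> y" using yF unfolding F_def by blast
      note a = a1 a2
      have "inf a1 a2 \<notin> p" using a p prime_inf by blast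
      moreover have "inf (f (inf a1 a2)) b \<le> inf x y"
      proof -
        have "inf (f (inf a1 a2)) b = inf (inf (f a1) b) (inf (f a2) b)"
          by (simp add: finf inf_aci)
        also have "\<dots> \<le> inf x y" using a1(2) a2(2) by (rule inf_mono)
        finally show ?thesis .
      qed
      ultimately show ?thesis by (auto simp: F_def)
    qed
    have dis: "I \<inter> F = {}"
    proof (rule ccontr)
      assume "I \<inter> F \<noteq> {}"
      then obtain z c a where "c \<in> p" "z \<le> f c" "a \<notin> p" "inf (f a) b \<le> z" by (auto simp: I_def F_def)
      then have "inf a (ft b) \<le> c" using P3 order_trans by blast
      then have "inf a (ft b) \<in> p" using prime_down p \<open>c \<in> p\<close> by blast
      then show False using p \<open>a \<notin> p\<close> prime_inf by blast
    qed
    obtain q where q: "prime_ideal q" "I \<subseteq> q" "q \<inter> F = {}"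
      using prime_ideal_thm[OF I Ft Fm dis] by blast
    have "f -` q = p"
    proof
      show "p \<subseteq> f -` q" using q(2) by (auto simp: I_def)
      show "f -` q \<subseteq> p"
      proof
        fix a assume "a \<in> f -` q"
        moreover have "a \<notin> p \<Longrightarrow> f a \<in> F" by (auto simp: F_def)
        ultimately show "a \<in> p" using q(3) by blast
      qed
    qed
    moreover have "b \<notin> q"
    proof -
      have "top \<notin> p" using p(1) by (simp add: prime_ideal_def)
      then have "b \<in> F" unfolding F_def using ftop by (intro CollectI exI[of _ top]) simp
      then show ?thesis using q(3) by blast
    qed
    ultimately show "p \<in> Spec_map f ` DD b" using q(1)
      by (auto simp: Spec_map_def DD_def Spec_def image_iff intro!: bexI[of _ q])
  qed
qed


lemma open_imp_images:
  fixes f :: "'a::{distrib_lattice,bounded_lattice} \<Rightarrow> 'b::{distrib_lattice,bounded_lattice}"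
  assumes h: "dlat_hom f"
    and om: "open_map (Spec_top :: 'b set topology) (Spec_top :: 'a set topology) (Spec_map f)"
  shows "\<exists>c. Spec_map f ` DD b = DD c"
proof -
  have fbot: "f bot = bot" and fsup: "\<And>x y. f (sup x y) = sup (f x) (f y)"
    using h by (auto simp: dlat_hom_def)
  define U where "U = Spec_map f ` DD b"
  have Uo: "openin Spec_top U" using om open_DD unfolding open_map_def U_def by blast
  define C where "C = {c. DD c \<subseteq> U}"
  define I where "I = {z. \<exists>c\<in>C. z \<le> f c}"
  have "\<exists>c\<in>C. b \<le> f c"
  proof (rule ccontr)
    assume nb: "\<not> ?thesis"
    have I: "is_ideal I" unfolding is_ideal_def
    proof (intro conjI allI impI)
      show "bot \<in> I" using DD_bot by (auto simp: I_def C_def intro!: bexI[of _ bot])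
    next
      fix x y assume "x \<in> I" "y \<in> I"
      then obtain c1 c2 where c: "c1 \<in> C" "c2 \<in> C" "x \<le> f c1" "y \<le> f c2" by (auto simp: I_def)
      moreover have "sup c1 c2 \<in> C" using c by (auto simp: C_def DD_sup)
      moreover have "sup x y \<le> f (sup c1 c2)" using c by (simp add: fsup le_supI1 le_supI2)
      ultimately show "sup x y \<in> I" by (auto simp: I_def)
    next
      fix x y assume "x \<in> I" "y \<le> x"
      then obtain c where "c \<in> C" "x \<le> f c" by (auto simp: I_def)
      then show "y \<in> I" using \<open>y \<le> x\<close> order.trans[of y x "f c"] by (auto simp: I_def)
    qed
    have dis: "I \<inter> {z. b \<le> z} = {}"
    proof (rule ccontr)
      assume "I \<inter> {z. b \<le> z} \<noteq> {}"
      then obtain z c where zc: "c \<in> C" "z \<le> f c" "b \<le> z" by (auto simp: I_def)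
      have "b \<le> f c" using zc(3) zc(2) by (rule order.trans)
      then show False using nb zc(1) by blast
    qed
    obtain q where q: "prime_ideal q" "I \<subseteq> q" "q \<inter> {z. b \<le> z} = {}"
      using prime_ideal_thm[OF I _ _ dis] by (auto intro: le_infI)
    then have "q \<in> DD b" by (auto simp: DD_def Spec_def)
    then have "f -` q \<in> U" by (auto simp: U_def Spec_map_def)
    then obtain c where c: "f -` q \<in> DD c" "DD c \<subseteq> U" using open_basis[OF Uo] by blast
    then have "f c \<in> q" using q(2) by (auto simp: I_def C_def)
    then show False using c(1) by (auto simp: DD_def)
  qed
  then obtain c0 where c0: "DD c0 \<subseteq> U" "b \<le> f c0" by (auto simp: C_def)
  have "U \<subseteq> DD c0"
  proof
    fix p assume "p \<in> U"
    then obtain q where q: "prime_ideal q" "b \<notin> q" "p = f -` q"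
      by (auto simp: U_def Spec_map_def DD_def Spec_def)
    then have "f c0 \<notin> q" using c0 prime_down by blast
    then show "p \<in> DD c0" using q prime_preimage[OF h q(1)] by (auto simp: DD_def Spec_def)
  qed
  then show ?thesis using c0 U_def by blast
qed

theorem theorem8:
  fixes f :: "'a::{distrib_lattice,bounded_lattice} \<Rightarrow> 'b::{distrib_lattice,bounded_lattice}"
  assumes "dlat_hom f"
  shows "(open_map (Spec_top :: 'b set topology) (Spec_top :: 'a set topology) (Spec_map f)
           \<longleftrightarrow> (\<exists>ft :: 'b \<Rightarrow> 'a.
                 (\<forall>c b. b \<le> f c \<longleftrightarrow> ft b \<le> c)
               \<and> (\<forall>a c b. inf (f a) b \<le> f c \<longleftrightarrow> inf a (ft b) \<le> c)
               \<and> (\<forall>a b. ft (inf (f a) b) = inf a (ft b))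
               \<and> (\<forall>a. ft (f a) = inf (ft top) a)))
         \<and> ((\<exists>ft :: 'b \<Rightarrow> 'a.
                 (\<forall>c b. b \<le> f c \<longleftrightarrow> ft b \<le> c)
               \<and> (\<forall>a c b. inf (f a) b \<le> f c \<longleftrightarrow> inf a (ft b) \<le> c)
               \<and> (\<forall>a b. ft (inf (f a) b) = inf a (ft b))
               \<and> (\<forall>a. ft (f a) = inf (ft top) a))
         \<longleftrightarrow> (\<exists>ft :: 'b \<Rightarrow> 'a. \<forall>a c b. inf (f a) b \<le> f c \<longleftrightarrow> inf a (ft b) \<le> c))
         \<and> ((\<exists>ft :: 'b \<Rightarrow> 'a. \<forall>a c b. inf (f a) b \<le> f c \<longleftrightarrow> inf a (ft b) \<le> c)
         \<longleftrightarrow> (\<exists>ft :: 'b \<Rightarrow> 'a.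
                 (\<forall>b. (\<forall>c. b \<le> f c \<longrightarrow> ft b \<le> c)
                    \<and> (\<forall>d. (\<forall>c. b \<le> f c \<longrightarrow> d \<le> c) \<longrightarrow> d \<le> ft b))
               \<and> (\<forall>a c b. inf (f a) b \<le> f c \<longleftrightarrow> inf a (ft b) \<le> c)))"
proof -
  have ftop: "f top = top" using assms by (simp add: dlat_hom_def)
  have alg: "(\<forall>c b. b \<le> f c \<longleftrightarrow> ft b \<le> c) \<and> (\<forall>a b. ft (inf (f a) b) = inf a (ft b))
      \<and> (\<forall>a. ft (f a) = inf (ft top) a)"
    if P3: "\<forall>a c b. inf (f a) b \<le> f c \<longleftrightarrow> inf a (ft b) \<le> c" for ft :: "'b \<Rightarrow> 'a"
  proof -
    have A: "b \<le> f c \<longleftrightarrow> ft b \<le> c" for b c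
    proof -
      have "inf (f top) b \<le> f c \<longleftrightarrow> inf top (ft b) \<le> c" using P3 by blast
      then show ?thesis using ftop by simp
    qed
    have C: "ft (inf (f a) b) = inf a (ft b)" for a b
    proof (rule order.antisym)
      have "inf (f a) b \<le> f (inf a (ft b)) \<longleftrightarrow> inf a (ft b) \<le> inf a (ft b)" using P3 by blast
      then show "ft (inf (f a) b) \<le> inf a (ft b)" using A by simp
      have "inf (f a) b \<le> f (ft (inf (f a) b)) \<longleftrightarrow> inf a (ft b) \<le> ft (inf (f a) b)" using P3 by blast
      then show "inf a (ft b) \<le> ft (inf (f a) b)" using A by simp
    qed
    have D: "ft (f a) = inf (ft top) a" for a using C[of a top] by (simp add: inf_commute)
    show ?thesis using A C D by blast
  qed
  have t1: "open_map (Spec_top :: 'b set topology) (Spec_top :: 'a set topology) (Spec_map f)"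
    if P3: "\<forall>a c b. inf (f a) b \<le> f c \<longleftrightarrow> inf a (ft b) \<le> c" for ft :: "'b \<Rightarrow> 'a"
  proof -
    have img: "Spec_map f ` DD b = DD (ft b)" for b
      by (rule image_from_P3[OF assms]) (use P3 in blast)
    show ?thesis unfolding open_map_def
    proof (intro allI impI)
      fix U :: "'b set set" assume Uo: "openin Spec_top U"
      show "openin Spec_top (Spec_map f ` U)"
      proof (rule open_from_basis)
        fix p assume "p \<in> Spec_map f ` U"
        then obtain q where q: "q \<in> U" "p = Spec_map f q" by blast
        then obtain b where b: "q \<in> DD b" "DD b \<subseteq> U" using open_basis[OF Uo] by blast
        have "p \<in> DD (ft b)" using q b img[of b] by blast
        moreover have "DD (ft b) \<subseteq> Spec_map f ` U" using b img[of b] by blast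
        ultimately show "\<exists>c. p \<in> DD c \<and> DD c \<subseteq> Spec_map f ` U" by blast
      qed
    qed
  qed
  have t2: "\<exists>ft :: 'b \<Rightarrow> 'a. \<forall>a c b. inf (f a) b \<le> f c \<longleftrightarrow> inf a (ft b) \<le> c"
    if om: "open_map (Spec_top :: 'b set topology) (Spec_top :: 'a set topology) (Spec_map f)"
  proof -
    have "\<forall>b. \<exists>c. Spec_map f ` DD b = DD c" using open_imp_images[OF assms om] by blast
    then obtain ft :: "'b \<Rightarrow> 'a" where img: "\<And>b. Spec_map f ` DD b = DD (ft b)" by metis
    have "\<forall>a c b. inf (f a) b \<le> f c \<longleftrightarrow> inf a (ft b) \<le> c"
      using P3_from_image[OF assms img] by blast
    then show ?thesis by blast
  qed
  have P4: "(\<forall>b. (\<forall>c. b \<le> f c \<longrightarrow> ft b \<le> c) \<and> (\<forall>d. (\<forall>c. b \<le> f c \<longrightarrow> d \<le> c) \<longrightarrow> d \<le> ft b))"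
    if P3: "\<forall>a c b. inf (f a) b \<le> f c \<longleftrightarrow> inf a (ft b) \<le> c" for ft :: "'b \<Rightarrow> 'a"
  proof -
    have A: "b \<le> f c \<longleftrightarrow> ft b \<le> c" for b c using alg[OF P3] by blast
    show ?thesis
    proof (intro allI conjI impI)
      fix b c assume "b \<le> f c" then show "ft b \<le> c" using A by blast
    next
      fix b d assume H: "\<forall>c. b \<le> f c \<longrightarrow> d \<le> c"
      have "b \<le> f (ft b)" using A by blast
      then show "d \<le> ft b" using H by blast
    qed
  qed
  show ?thesis
  proof (intro conjI iffI)
    assume om: "open_map (Spec_top :: 'b set topology) (Spec_top :: 'a set topology) (Spec_map f)"
    obtain ft :: "'b \<Rightarrow> 'a" where P3: "\<forall>a c b. inf (f a) b \<le> f c \<longleftrightarrow> inf a (ft b) \<le> c"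
      using t2[OF om] by blast
    show "\<exists>ft :: 'b \<Rightarrow> 'a.
                 (\<forall>c b. b \<le> f c \<longleftrightarrow> ft b \<le> c)
               \<and> (\<forall>a c b. inf (f a) b \<le> f c \<longleftrightarrow> inf a (ft b) \<le> c)
               \<and> (\<forall>a b. ft (inf (f a) b) = inf a (ft b))
               \<and> (\<forall>a. ft (f a) = inf (ft top) a)"
      apply (rule exI[of _ ft]) using alg[OF P3] P3 by blast
  next
    assume "\<exists>ft :: 'b \<Rightarrow> 'a.
                 (\<forall>c b. b \<le> f c \<longleftrightarrow> ft b \<le> c)
               \<and> (\<forall>a c b. inf (f a) b \<le> f c \<longleftrightarrow> inf a (ft b) \<le> c)
               \<and> (\<forall>a b. ft (inf (f a) b) = inf a (ft b))
               \<and> (\<forall>a. ft (f a) = inf (ft top) a)"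
    then obtain ft :: "'b \<Rightarrow> 'a" where P3: "\<forall>a c b. inf (f a) b \<le> f c \<longleftrightarrow> inf a (ft b) \<le> c"
      by blast
    show "open_map (Spec_top :: 'b set topology) (Spec_top :: 'a set topology) (Spec_map f)"
      by (rule t1[OF P3])
  next
    assume "\<exists>ft :: 'b \<Rightarrow> 'a.
                 (\<forall>c b. b \<le> f c \<longleftrightarrow> ft b \<le> c)
               \<and> (\<forall>a c b. inf (f a) b \<le> f c \<longleftrightarrow> inf a (ft b) \<le> c)
               \<and> (\<forall>a b. ft (inf (f a) b) = inf a (ft b))
               \<and> (\<forall>a. ft (f a) = inf (ft top) a)"
    then obtain ft :: "'b \<Rightarrow> 'a" where P3: "\<forall>a c b. inf (f a) b \<le> f c \<longleftrightarrow> inf a (ft b) \<le> c"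
      by blast
    then show "\<exists>ft :: 'b \<Rightarrow> 'a. \<forall>a c b. inf (f a) b \<le> f c \<longleftrightarrow> inf a (ft b) \<le> c" by blast
  next
    assume "\<exists>ft :: 'b \<Rightarrow> 'a. \<forall>a c b. inf (f a) b \<le> f c \<longleftrightarrow> inf a (ft b) \<le> c"
    then obtain ft :: "'b \<Rightarrow> 'a" where P3: "\<forall>a c b. inf (f a) b \<le> f c \<longleftrightarrow> inf a (ft b) \<le> c"
      by blast
    show "\<exists>ft :: 'b \<Rightarrow> 'a.
                 (\<forall>c b. b \<le> f c \<longleftrightarrow> ft b \<le> c)
               \<and> (\<forall>a c b. inf (f a) b \<le> f c \<longleftrightarrow> inf a (ft b) \<le> c)
               \<and> (\<forall>a b. ft (inf (f a) b) = inf a (ft b))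
               \<and> (\<forall>a. ft (f a) = inf (ft top) a)"
      apply (rule exI[of _ ft]) using alg[OF P3] P3 by blast
  next
    assume "\<exists>ft :: 'b \<Rightarrow> 'a. \<forall>a c b. inf (f a) b \<le> f c \<longleftrightarrow> inf a (ft b) \<le> c"
    then obtain ft :: "'b \<Rightarrow> 'a" where P3: "\<forall>a c b. inf (f a) b \<le> f c \<longleftrightarrow> inf a (ft b) \<le> c"
      by blast
    show "\<exists>ft :: 'b \<Rightarrow> 'a.
                 (\<forall>b. (\<forall>c. b \<le> f c \<longrightarrow> ft b \<le> c)
                    \<and> (\<forall>d. (\<forall>c. b \<le> f c \<longrightarrow> d \<le> c) \<longrightarrow> d \<le> ft b))
               \<and> (\<forall>a c b. inf (f a) b \<le> f c \<longleftrightarrow> inf a (ft b) \<le> c)"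
      apply (rule exI[of _ ft]) using P4[OF P3] P3 by blast
  next
    assume "\<exists>ft :: 'b \<Rightarrow> 'a.
                 (\<forall>b. (\<forall>c. b \<le> f c \<longrightarrow> ft b \<le> c)
                    \<and> (\<forall>d. (\<forall>c. b \<le> f c \<longrightarrow> d \<le> c) \<longrightarrow> d \<le> ft b))
               \<and> (\<forall>a c b. inf (f a) b \<le> f c \<longleftrightarrow> inf a (ft b) \<le> c)"
    then show "\<exists>ft :: 'b \<Rightarrow> 'a. \<forall>a c b. inf (f a) b \<le> f c \<longleftrightarrow> inf a (ft b) \<le> c" by blast
  qed
qed

end
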